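(* For every positive integer $k$, the function $f(x)=\frac{4}{15}\cdot\frac{30kx+45k+4}{(x+1)^2(15k-8x-4)}$ on $(-1,\tfrac{15k-4}{8})$ equals $\mathrm{Vol}(\sigma_0^\vee((x,1,0)))$ and its derivative has a unique zero in $[-1,\tfrac{15k-4}{8}]$, namely $x_0=\frac{225k^2+(15k+4)\sqrt{225k^2+600k+144}-600k-48}{480k}$. Moreover $x_0$ is irrational for every positive integer $k\ne3$.
   Context: Here $\sigma_0=\mathrm{pos}((2,1,5),(3k-2,1,-3),(-2,1,-3),(-1,1,0))\subset\mathbb{R}^3$, $\sigma_0^\vee$ its dual cone, $\sigma_0^\vee(w)=\{m\in\sigma_0^\vee:\langle m,w\rangle\le1\}$, and $\mathrm{Vol}$ denotes normalised lattice volume with respect to $\mathbb{Z}^3$ (i.e. $3!$ times Lebesgue volume). *)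

theory Defs
  imports "HOL-Analysis.Analysis"
begin

definition pos :: "(real^3) set \<Rightarrow> (real^3) set" where
  "pos S = {u. \<exists>c. (\<forall>v\<in>S. 0 \<le> c v) \<and> u = (\<Sum>v\<in>S. c v *\<^sub>R v)}"

definition dual_cone :: "(real^3) set \<Rightarrow> (real^3) set" where
  "dual_cone \<sigma> = {m. \<forall>u\<in>\<sigma>. 0 \<le> inner m u}"

definition dual_trunc :: "(real^3) set \<Rightarrow> real^3 \<Rightarrow> (real^3) set" where
  "dual_trunc \<sigma> w = {m \<in> dual_cone \<sigma>. inner m w \<le> 1}"

definition sigma0 :: "nat \<Rightarrow> (real^3) set" where
  "sigma0 k = pos {vector [2, 1, 5], vector [3 * real k - 2, 1, -3],
                   vector [-2, 1, -3], vector [-1, 1, 0]}"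

text \<open>Normalised lattice volume w.r.t. Z^3: 3! times Lebesgue volume.\<close>
definition Vol :: "(real^3) set \<Rightarrow> real" where
  "Vol S = 6 * measure lebesgue S"

definition fk :: "nat \<Rightarrow> real \<Rightarrow> real" where
  "fk k x = 4/15 * (30 * real k * x + 45 * real k + 4) /
             ((x + 1)^2 * (15 * real k - 8 * x - 4))"

definition x0 :: "nat \<Rightarrow> real" where
  "x0 k = (225 * (real k)^2 + (15 * real k + 4) * sqrt (225 * (real k)^2 + 600 * real k + 144)
           - 600 * real k - 48) / (480 * real k)"

end

theory Submission
  imports Defs
begin


lemma inner_v3: "inner (m::real^3) (vector [b1,b2,b3]) = m$1*b1+m$2*b2+m$3*b3"
  by (simp add: inner_vec_def sum_3)

lemma dual_pos: assumes "finite S" shows "dual_cone (pos S) = {m. \<forall>v\<in>S. 0 \<le> inner m v}"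
proof (intro set_eqI iffI)
  fix m assume m: "m \<in> dual_cone (pos S)"
  show "m \<in> {m. \<forall>v\<in>S. 0 \<le> inner m v}"
  proof (safe)
    fix v assume v: "v \<in> S"
    have "(\<Sum>u\<in>S. (if u = v then 1 else 0) *\<^sub>R u) = (\<Sum>u\<in>S. if u = v then u else 0)"
      by (intro sum.cong) auto
    also have "\<dots> = v" using assms v by (simp add: sum.delta')
    finally have "v = (\<Sum>u\<in>S. (if u = v then 1 else 0) *\<^sub>R u)" by simp
    then have "v \<in> pos S" unfolding pos_def by (intro CollectI exI[of _ "\<lambda>u. if u = v then 1 else 0"]) auto
    then show "0 \<le> inner m v" using m by (auto simp: dual_cone_def)
  qed
next
  fix m assume m: "m \<in> {m. \<forall>v\<in>S. 0 \<le> inner m v}"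
  show "m \<in> dual_cone (pos S)"
    unfolding dual_cone_def pos_def
    using m by (auto simp: inner_sum_right intro!: sum_nonneg mult_nonneg_nonneg)
qed

lemma Basis3: "(Basis :: (real^3) set) = {axis 1 1, axis 2 1, axis 3 1}"
  by (auto simp: Basis_vec_def UNIV_3)

lemma sumBasis3: "(\<Sum>i\<in>Basis. (x::real^3) \<bullet> i) = x$1+x$2+x$3"
  unfolding Basis3 by (simp add: inner_axis axis_eq_axis)

lemma std3: "convex hull (insert 0 Basis) = {\<mu>::real^3. 0\<le>\<mu>$1 \<and> 0\<le>\<mu>$2 \<and> 0\<le>\<mu>$3 \<and> \<mu>$1+\<mu>$2+\<mu>$3 \<le> 1}"
  unfolding std_simplex sumBasis3 unfolding Basis3 by (auto simp: inner_axis)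

lemma std3_measure: "measure lebesgue (convex hull (insert 0 (Basis::(real^3) set))) = 1/6"
proof -
  have compact: "compact (convex hull (insert 0 (Basis::(real^3) set)))"
    by (intro finite_imp_compact_convex_hull) auto
  have "measure lebesgue (convex hull (insert 0 (Basis::(real^3) set))) = measure lborel (convex hull (insert 0 (Basis::(real^3) set)))"
    using compact by (intro measure_completion) (auto dest: compact_imp_closed)
  also have "\<dots> = 1 / fact DIM(real^3)" by (rule content_std_simplex)
  also have "\<dots> = 1/6" by (simp add: fact_numeral)
  finally show ?thesis .
qed

lemma detg: "det (matrix (\<lambda>\<mu>::real^3. \<mu>$1 *\<^sub>R a + \<mu>$2 *\<^sub>R b + \<mu>$3 *\<^sub>R (c::real^3))) =
   a$1*b$2*c$3 - a$1*c$2*b$3 - b$1*a$2*c$3 + b$1*c$2*a$3 + c$1*a$2*b$3 - c$1*b$2*a$3"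
  by (simp add: det_3 matrix_def axis_def)


lemma tet_measure:
  fixes a b c w ua ub uc :: "real^3"
  assumes A1: "inner a ua > 0" and "inner b ua = 0" "inner c ua = 0"
    and "inner a ub = 0" and B2: "inner b ub > 0" and "inner c ub = 0"
    and "inner a uc = 0" "inner b uc = 0" and C3: "inner c uc > 0"
    and "inner a w = 1" "inner b w = 1" "inner c w = 1"
    and dec: "\<And>m. m = (inner m ua / inner a ua) *\<^sub>R a + (inner m ub / inner b ub) *\<^sub>R b + (inner m uc / inner c uc) *\<^sub>R c"
  shows "{m. 0 \<le> inner m ua \<and> 0 \<le> inner m ub \<and> 0 \<le> inner m uc \<and> inner m w \<le> 1} \<in> lmeasurable"
    "measure lebesgue {m. 0 \<le> inner m ua \<and> 0 \<le> inner m ub \<and> 0 \<le> inner m uc \<and> inner m w \<le> 1} =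
      \<bar>a$1*b$2*c$3 - a$1*c$2*b$3 - b$1*a$2*c$3 + b$1*c$2*a$3 + c$1*a$2*b$3 - c$1*b$2*a$3\<bar> / 6"
proof -
  define g where "g = (\<lambda>\<mu>::real^3. \<mu>$1 *\<^sub>R a + \<mu>$2 *\<^sub>R b + \<mu>$3 *\<^sub>R c)"
  define std where "std = convex hull (insert 0 (Basis::(real^3) set))"
  have lin: "linear g" unfolding g_def
    by (simp add: linear_iff algebra_simps)
  have compact: "compact std" unfolding std_def
    by (intro finite_imp_compact_convex_hull) auto
  have eq: "{m. 0 \<le> inner m ua \<and> 0 \<le> inner m ub \<and> 0 \<le> inner m uc \<and> inner m w \<le> 1} = g ` std"
  proof (intro set_eqI iffI)
    fix m assume m: "m \<in> {m. 0 \<le> inner m ua \<and> 0 \<le> inner m ub \<and> 0 \<le> inner m uc \<and> inner m w \<le> 1}"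
    define \<mu> where "\<mu> = (vector [inner m ua / inner a ua, inner m ub / inner b ub, inner m uc / inner c uc] :: real^3)"
    have gm: "g \<mu> = m" unfolding g_def \<mu>_def using dec[of m] by (simp add: vector_3)
    have "inner m w = inner (g \<mu>) w" using gm by simp
    also have "\<dots> = \<mu>$1 + \<mu>$2 + \<mu>$3" unfolding g_def using assms by (simp add: inner_add_left)
    finally have "\<mu>$1 + \<mu>$2 + \<mu>$3 \<le> 1" using m by simp
    moreover have "0\<le>\<mu>$1 \<and> 0\<le>\<mu>$2 \<and> 0\<le>\<mu>$3" unfolding \<mu>_def using m A1 B2 C3 by (simp add: vector_3)
    ultimately have "\<mu> \<in> std" unfolding std_def std3 by simp
    then show "m \<in> g ` std" using gm by blast
  next
    fix m assume "m \<in> g ` std"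
    then obtain \<mu> where \<mu>: "\<mu> \<in> std" and m: "m = g \<mu>" by blast
    from \<mu> have h: "0\<le>\<mu>$1 \<and> 0\<le>\<mu>$2 \<and> 0\<le>\<mu>$3 \<and> \<mu>$1+\<mu>$2+\<mu>$3 \<le> 1" unfolding std_def std3 by simp
    have "inner m ua = \<mu>$1 * inner a ua" "inner m ub = \<mu>$2 * inner b ub" "inner m uc = \<mu>$3 * inner c uc"
      "inner m w = \<mu>$1 + \<mu>$2 + \<mu>$3"
      unfolding m g_def using assms by (simp_all add: inner_add_left)
    then show "m \<in> {m. 0 \<le> inner m ua \<and> 0 \<le> inner m ub \<and> 0 \<le> inner m uc \<and> inner m w \<le> 1}"
      using h A1 B2 C3 by simp
  qed
  have "compact (g ` std)" using compact lin by (intro compact_continuous_image linear_continuous_on linear_conv_bounded_linear[THEN iffD1])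
  then show "{m. 0 \<le> inner m ua \<and> 0 \<le> inner m ub \<and> 0 \<le> inner m uc \<and> inner m w \<le> 1} \<in> lmeasurable"
    unfolding eq by (rule lmeasurable_compact)
  have "measure lebesgue (g ` std) = \<bar>det (matrix g)\<bar> * measure lebesgue std"
    using compact lin by (intro measure_lebesgue_linear_transformation) (auto intro: compact_imp_bounded dest: compact_imp_closed)
  then show "measure lebesgue {m. 0 \<le> inner m ua \<and> 0 \<le> inner m ub \<and> 0 \<le> inner m uc \<and> inner m w \<le> 1} =
      \<bar>a$1*b$2*c$3 - a$1*c$2*b$3 - b$1*a$2*c$3 + b$1*c$2*a$3 + c$1*a$2*b$3 - c$1*b$2*a$3\<bar> / 6"
    unfolding eq using std3_measure unfolding std_def g_def detg by simp
qed


lemma vol_formula: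
  fixes k :: nat and x :: real
  assumes k: "k \<ge> 1" and x1: "-1 < x" and x2: "x < (15 * real k - 4) / 8"
  shows "fk k x = Vol (dual_trunc (sigma0 k) (vector [x, 1, 0]))"
proof -
  define K where "K = real k"
  have K: "K \<ge> 1" using k by (simp add: K_def)
  define aw where "aw = 5*(x+1)"
  define bw where "bw = 15*K-4-8*x"
  have aw: "aw > 0" using x1 by (simp add: aw_def)
  have bw: "bw > 0" using x2 by (simp add: bw_def K_def)
  define w where "w = (vector [x, 1, 0] :: real^3)"
  define v1 where "v1 = (vector [2, 1, 5] :: real^3)"
  define v2 where "v2 = (vector [3*K-2, 1, -3] :: real^3)"
  define v3 where "v3 = (vector [-2, 1, -3] :: real^3)"
  define v4 where "v4 = (vector [-1, 1, 0] :: real^3)"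
  define n where "n = (vector [14, -5, 15] :: real^3)"
  define nn where "nn = (vector [-14, 5, -15] :: real^3)"
  define a1 where "a1 = (vector [5/aw, 5/aw, -3/aw] :: real^3)"
  define b1 where "b1 = (vector [-8/bw, (15*K-4)/bw, (4-3*K)/bw] :: real^3)"
  define c1 where "c1 = (vector [0, 1, 1/3] :: real^3)"
  define dw where "dw = 3*(x+1)"
  have dw: "dw > 0" using x1 by (simp add: dw_def)
  define d2 where "d2 = (vector [3/dw, 3/dw, -1/dw] :: real^3)"
  have xne: "x + 1 \<noteq> 0" using x1 by simp
  note defs = w_def v1_def v2_def v3_def v4_def n_def nn_def a1_def b1_def c1_def d2_def
  define T1 where "T1 = {m. 0 \<le> inner m v2 \<and> 0 \<le> inner m nn \<and> 0 \<le> inner m v1 \<and> inner m w \<le> 1}"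
  define T2 where "T2 = {m. 0 \<le> inner m v3 \<and> 0 \<le> inner m v4 \<and> 0 \<le> inner m n \<and> inner m w \<le> 1}"
  have K4: "15*K+4 > 0" using K by simp
  have E1: "inner a1 v2 = (15*K+4)/aw" "inner b1 v2 = 0" "inner c1 v2 = 0"
    "inner a1 nn = 0" "inner b1 nn = 8*(15*K+4)/bw" "inner c1 nn = 0"
    "inner a1 v1 = 0" "inner b1 v1 = 0" "inner c1 v1 = 8/3"
    "inner a1 w = (5*x+5)/aw" "inner b1 w = (15*K-4-8*x)/bw" "inner c1 w = 1"
    using aw bw by (simp_all add: inner_v3 defs vector_3 field_simps)
  have H1: "0 < inner a1 v2" "inner b1 v2 = 0" "inner c1 v2 = 0"
    "inner a1 nn = 0" "0 < inner b1 nn" "inner c1 nn = 0"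
    "inner a1 v1 = 0" "inner b1 v1 = 0" "0 < inner c1 v1"
    "inner a1 w = 1" "inner b1 w = 1" "inner c1 w = 1"
    unfolding E1 using K4 aw bw by (simp_all add: aw_def bw_def)
  have D1: "m = (inner m v2 / inner a1 v2) *\<^sub>R a1 + (inner m nn / inner b1 nn) *\<^sub>R b1 + (inner m v1 / inner c1 v1) *\<^sub>R c1" for m
  proof -
    have KK: "0 < K * (K * 1800)" using K by simp
    have nz: "128 + (K * 960 + K * (K * 1800)) \<noteq> 0" using K KK by linarith
    show ?thesis unfolding E1 using K4 aw bw nz
      apply (simp add: vec_eq_iff forall_3 inner_v3 defs vector_3)
      apply (simp add: field_simps)
      done
  qed
  have T1: "T1 \<in> lmeasurable" "measure lebesgue T1 = 
     \<bar>a1$1*b1$2*c1$3 - a1$1*c1$2*b1$3 - b1$1*a1$2*c1$3 + b1$1*c1$2*a1$3 + c1$1*a1$2*b1$3 - c1$1*b1$2*a1$3\<bar> / 6"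
    unfolding T1_def by (rule tet_measure[OF H1 D1])+
  have E2: "inner a1 v3 = 4/aw" "inner c1 v3 = 0" "inner d2 v3 = 0"
    "inner a1 v4 = 0" "inner c1 v4 = 1" "inner d2 v4 = 0"
    "inner a1 n = 0" "inner c1 n = 0" "inner d2 n = 12/dw"
    "inner a1 w = (5*x+5)/aw" "inner c1 w = 1" "inner d2 w = (3*x+3)/dw"
    using aw dw by (simp_all add: inner_v3 defs vector_3 field_simps)
  have H2: "0 < inner a1 v3" "inner c1 v3 = 0" "inner d2 v3 = 0"
    "inner a1 v4 = 0" "0 < inner c1 v4" "inner d2 v4 = 0"
    "inner a1 n = 0" "inner c1 n = 0" "0 < inner d2 n"
    "inner a1 w = 1" "inner c1 w = 1" "inner d2 w = 1"
    unfolding E2 using aw dw by (simp_all add: aw_def dw_def)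
  have D2: "m = (inner m v3 / inner a1 v3) *\<^sub>R a1 + (inner m v4 / inner c1 v4) *\<^sub>R c1 + (inner m n / inner d2 n) *\<^sub>R d2" for m
    unfolding E2 using aw dw
    apply (simp add: vec_eq_iff forall_3 inner_v3 defs vector_3)
    apply (simp add: field_simps aw_def dw_def)
    done
  have T2: "T2 \<in> lmeasurable" "measure lebesgue T2 = 
     \<bar>a1$1*c1$2*d2$3 - a1$1*d2$2*c1$3 - c1$1*a1$2*d2$3 + c1$1*d2$2*a1$3 + d2$1*a1$2*c1$3 - d2$1*c1$2*a1$3\<bar> / 6"
    unfolding T2_def by (rule tet_measure[OF H2 D2])+
  define P where "P = {m. 0 \<le> inner m v1 \<and> 0 \<le> inner m v2 \<and> 0 \<le> inner m v3 \<and> 0 \<le> inner m v4 \<and> inner m w \<le> 1}"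
  have Pdef: "dual_trunc (sigma0 k) (vector [x, 1, 0]) = P"
    unfolding dual_trunc_def sigma0_def P_def
    by (subst dual_pos) (auto simp: defs K_def)
  have lin1: "inner m v3 = (4 * inner m v2 + 3*K * inner m nn) / (15*K+4)" for m
    using K4 by (simp add: defs inner_v3 field_simps)
  have lin2: "inner m v4 = (3 * inner m v1 + inner m nn) / 8" for m
    by (simp add: defs inner_v3 field_simps)
  have nnn: "inner m nn = - inner m n" for m by (simp add: defs inner_v3)
  have PU: "P = T1 \<union> T2"
  proof (intro set_eqI iffI)
    fix m assume "m \<in> P"
    then show "m \<in> T1 \<union> T2" unfolding P_def T1_def T2_def nnn by auto
  next
    fix m assume "m \<in> T1 \<union> T2"
    then show "m \<in> P"
    proof
      assume m: "m \<in> T1"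
      have "0 \<le> inner m v3" unfolding lin1 using m K4 K unfolding T1_def by (auto intro!: divide_nonneg_pos add_nonneg_nonneg mult_nonneg_nonneg)
      moreover have "0 \<le> inner m v4" unfolding lin2 using m unfolding T1_def by auto
      ultimately show "m \<in> P" using m unfolding T1_def P_def by auto
    next
      assume m: "m \<in> T2"
      have e1: "inner m v1 = (8 * inner m v4 + inner m n) / 3" using lin2[of m] nnn[of m] by simp
      have e2: "inner m v2 = ((15*K+4) * inner m v3 + 3*K * inner m n) / 4" using lin1[of m] nnn[of m] K4 by (simp add: field_simps)
      have "0 \<le> inner m v1" unfolding e1 using m unfolding T2_def by auto
      moreover have "0 \<le> inner m v2" unfolding e2 using m K4 K unfolding T2_def by (auto intro!: divide_nonneg_pos add_nonneg_nonneg mult_nonneg_nonneg)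
      ultimately show "m \<in> P" using m unfolding T2_def P_def by auto
    qed
  qed
  have neg: "negligible (T1 \<inter> T2)"
  proof (rule negligible_subset)
    show "negligible {m. n \<bullet> m = 0}" by (rule negligible_hyperplane) (simp add: n_def vec_eq_iff forall_3)
    show "T1 \<inter> T2 \<subseteq> {m. n \<bullet> m = 0}" unfolding T1_def T2_def nnn by (auto simp: inner_commute)
  qed
  have "measure lebesgue P = measure lebesgue T1 + measure lebesgue T2"
    unfolding PU using measure_Un3[OF T1(1) T2(1)] negligible_imp_measure0[OF neg] by simp
  then have V: "Vol (dual_trunc (sigma0 k) (vector [x, 1, 0])) = 
     \<bar>a1$1*b1$2*c1$3 - a1$1*c1$2*b1$3 - b1$1*a1$2*c1$3 + b1$1*c1$2*a1$3 + c1$1*a1$2*b1$3 - c1$1*b1$2*a1$3\<bar>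
   + \<bar>a1$1*c1$2*d2$3 - a1$1*d2$2*c1$3 - c1$1*a1$2*d2$3 + c1$1*d2$2*a1$3 + d2$1*a1$2*c1$3 - d2$1*c1$2*a1$3\<bar>"
    unfolding Vol_def Pdef T1(2) T2(2) by simp
  have det1: "a1$1*b1$2*c1$3 - a1$1*c1$2*b1$3 - b1$1*a1$2*c1$3 + b1$1*c1$2*a1$3 + c1$1*a1$2*b1$3 - c1$1*b1$2*a1$3
     = 8*(15*K+4)/(3*aw*bw)"
    using aw bw by (simp add: defs vector_3 field_simps; (simp add: algebra_simps)?)
  have det2: "a1$1*c1$2*d2$3 - a1$1*d2$2*c1$3 - c1$1*a1$2*d2$3 + c1$1*d2$2*a1$3 + d2$1*a1$2*c1$3 - d2$1*c1$2*a1$3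
     = 12/(3*aw*dw)"
    using aw dw by (simp add: defs vector_3 field_simps; (simp add: algebra_simps)?)
  have p1: "8*(15*K+4)/(3*aw*bw) > 0" using aw bw K4 by simp
  have p2: "12/(3*aw*dw) > 0" using aw dw by simp
  have xp: "x + 1 > 0" using x1 by simp
  have gen: "4/15*(2*(15*K+4)*y+B)/(y^2*B) = 8*(15*K+4)/(3*(5*y)*B) + 12/(3*(5*y)*(3*y))"
    if "y > 0" "B > 0" for y B using that by (simp add: field_simps power2_eq_square)
  have fkx: "fk k x = 4/15*(2*(15*K+4)*(x+1)+bw)/((x+1)^2*bw)"
    unfolding fk_def K_def[symmetric] bw_def by (simp add: algebra_simps)
  show ?thesis unfolding V det1 det2 abs_of_pos[OF p1] abs_of_pos[OF p2] fkx
    unfolding aw_def dw_def using gen[OF xp bw] by simp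
qed




definition Qk :: "real \<Rightarrow> real \<Rightarrow> real" where
  "Qk K x = 480*K*x^2 - (450*K^2-1200*K-96)*x - (900*K^2-480*K-64)"

lemma deriv_fk:
  fixes k :: nat and x :: real
  assumes k: "k \<ge> 1" and x1: "-1 < x" and x2: "x < (15 * real k - 4) / 8"
  shows "(fk k has_real_derivative
     (4/15 * ((x+1) * Qk (real k) x) / ((x+1)^2 * (15 * real k - 8 * x - 4))^2)) (at x)"
proof -
  define K where "K = real k"
  have B: "15*K - 8*x - 4 > 0" using x2 by (simp add: K_def)
  have y: "x + 1 > 0" using x1 by simp
  have f: "fk k = (\<lambda>x. 4/15 * (30 * K * x + 45 * K + 4) / ((x + 1)^2 * (15 * K - 8 * x - 4)))"
    by (simp add: fk_def K_def fun_eq_iff)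
  show ?thesis unfolding f K_def[symmetric]
    apply (rule derivative_eq_intros refl | simp)+
    using B y apply simp
    using B y apply (simp add: Qk_def field_simps power2_eq_square)
    done
qed

lemma x0_facts:
  fixes k :: nat
  assumes k: "k \<ge> 1"
  defines "K \<equiv> real k"
  defines "r \<equiv> sqrt (225*K^2 + 600*K + 144)"
  defines "x1 \<equiv> (225*K^2 - 600*K - 48 - (15*K+4)*r) / (480*K)"
  shows "\<And>x. Qk K x = 480*K*(x - x0 k)*(x - x1)" "x1 < -1" "-1 < x0 k" "x0 k < (15*K-4)/8"
proof -
  have K: "K \<ge> 1" using k by (simp add: K_def)
  have r2: "r^2 = 225*K^2 + 600*K + 144" unfolding r_def using K by (simp add: add_nonneg_nonneg)
  have r0: "r \<ge> 0" unfolding r_def using K by simp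
  have rl: "15*K+4 \<le> r" unfolding r_def using K
    by (intro real_le_rsqrt) (simp add: power2_eq_square algebra_simps)
  have ru: "r \<le> 15*K+20" unfolding r_def using K
    by (intro real_le_lsqrt) (simp_all add: power2_eq_square algebra_simps)
  define A where "A = 225*K^2 - 600*K - 48"
  define B where "B = 15*K+4"
  have x0e: "x0 k = (A + B*r)/(480*K)" unfolding x0_def A_def B_def r_def K_def by simp
  have x1e: "x1 = (A - B*r)/(480*K)" unfolding x1_def A_def B_def by simp
  have Br1: "B*r \<ge> B*B" using rl K by (simp add: B_def mult_left_mono)
  have Br2: "B*r \<le> B*(15*K+20)" using ru K by (simp add: B_def mult_left_mono)
  have KK: "K*K \<ge> 1" using mult_mono[OF K K] K by simp
  have id: "A^2 - B^2*r^2 = -480*K*(900*K^2-480*K-64)" unfolding r2 A_def B_def by (simp add: algebra_simps power2_eq_square)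
  show "Qk K x = 480*K*(x - x0 k)*(x - x1)" for x
  proof -
    have "480*K*(x - x0 k)*(x - x1) = 480*K*x^2 - 2*A*x + (A^2 - B^2*r^2)/(480*K)"
      unfolding x0e x1e using K by (simp add: field_simps power2_eq_square)
    also have "\<dots> = 480*K*x^2 - 2*A*x + (-480*K*(900*K^2-480*K-64))/(480*K)" by (simp only: id)
    also have "\<dots> = Qk K x" unfolding Qk_def A_def using K by (simp add: field_simps power2_eq_square)
    finally show ?thesis by simp
  qed
  show "x1 < -1" unfolding x1e using K Br1 KK by (simp add: field_simps A_def B_def power2_eq_square algebra_simps)
  show "-1 < x0 k" unfolding x0e using K Br1 KK by (simp add: field_simps A_def B_def power2_eq_square algebra_simps)
  show "x0 k < (15*K-4)/8" unfolding x0e using K Br2 KK by (simp add: field_simps A_def B_def power2_eq_square algebra_simps)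
qed


lemma sqrt_nat_Rats:
  assumes "sqrt (real M) \<in> \<rat>" shows "\<exists>m. M = m^2"
proof -
  from assms obtain p q :: nat where q: "q \<noteq> 0" and pq: "\<bar>sqrt (real M)\<bar> = p / q" and cop: "coprime p q"
    by (rule Rats_abs_nat_div_natE)
  have "real p = sqrt (real M) * q" using pq q by (simp add: field_simps)
  then have "real p ^ 2 = real M * real q ^ 2" by (simp add: power_mult_distrib)
  then have eq: "p^2 = M * q^2" by (metis of_nat_eq_iff of_nat_mult of_nat_power)
  have "q^2 dvd p^2" using eq by simp
  moreover have "coprime (p^2) (q^2)" using cop by simp
  ultimately have "q^2 = 1" using coprime_common_divisor_nat by (metis dvd_refl)
  then have "q = 1" by simp
  with eq show ?thesis by auto
qed

lemma not_square:
  fixes k m :: nat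
  assumes k: "k \<ge> 1" "k \<noteq> 3"
  shows "225*k^2 + 600*k + 144 \<noteq> m^2"
proof
  assume eq: "225*k^2 + 600*k + 144 = m^2"
  have "(15*k+4)^2 < m^2" using eq k by (simp add: power2_eq_square algebra_simps)
  then have l: "15*k+4 < m" by (rule power_less_imp_less_base) simp
  have "m^2 < (15*k+20)^2" using eq k by (simp add: power2_eq_square algebra_simps)
  then have u: "m < 15*k+20" by (rule power_less_imp_less_base) simp
  define j where "j = m - 15*k"
  have mj: "m = 15*k + j" using l by (simp add: j_def)
  have j: "5 \<le> j" "j \<le> 19" using l u mj by auto
  have eq2: "30*k*j + j*j = 600*k + 144" using eq unfolding mj by (simp add: power2_eq_square algebra_simps)
  have "j \<in> {5..19}" using j by simp
  also have "{5..19} = {5,6,7,8,9,10,11,12,13,14,15,16,17,18,19::nat}" by code_simp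
  finally have "j \<in> {5,6,7,8,9,10,11,12,13,14,15,16,17,18,19::nat}" .
  then show False using eq2 k by (auto; presburger)
qed


lemma x0_irrat:
  fixes k :: nat assumes k: "k \<ge> 1" "k \<noteq> 3"
  shows "x0 k \<notin> \<rat>"
proof
  assume x: "x0 k \<in> \<rat>"
  define K where "K = real k"
  have K: "K \<ge> 1" using k by (simp add: K_def)
  define r where "r = sqrt (225*K^2 + 600*K + 144)"
  have x0e: "x0 k = (225*K^2 - 600*K - 48 + (15*K+4)*r)/(480*K)" unfolding x0_def r_def K_def by simp
  have h: "480*K*x0 k = (225*K^2-600*K-48) + (15*K+4)*r" using K unfolding x0e by simp
  then have h2: "(15*K+4)*r = 480*K*x0 k - (225*K^2-600*K-48)" by simp
  have "r = (480*K*x0 k - (225*K^2 - 600*K - 48)) / (15*K+4)"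
    using h2 K by (simp add: eq_divide_eq mult.commute)
  also have "\<dots> \<in> \<rat>" using x unfolding K_def
    by (intro Rats_divide Rats_diff Rats_mult Rats_add Rats_of_nat Rats_power) (auto intro: Rats_number_of)
  finally have "sqrt (real (225*k^2 + 600*k + 144)) \<in> \<rat>" unfolding r_def K_def by simp
  then obtain m where "225*k^2 + 600*k + 144 = m^2" using sqrt_nat_Rats by blast
  then show False using not_square[OF k] by blast
qed

lemma not_cont_left:
  fixes k :: nat assumes k: "k \<ge> 1"
  shows "\<not> isCont (fk k) (-1)"
proof
  assume c: "isCont (fk k) (-1)"
  define K where "K = real k"
  have K: "K \<ge> 1" using k by (simp add: K_def)
  have f0: "fk k (-1) = 0" by (simp add: fk_def)
  from c have "(fk k \<longlongrightarrow> 0) (at (-1))" unfolding isCont_def f0 .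
  from LIM_D[OF this, of 1] obtain d where d: "d > 0"
    and hd: "\<And>y. y \<noteq> -1 \<and> norm (y - (-1)) < d \<longrightarrow> norm (fk k y - 0) < 1" by auto
  define t where "t = min (d/2) (1/2)"
  have t: "0 < t" "t \<le> 1/2" "t < d" using d by (auto simp: t_def)
  define y where "y = t - 1"
  have "norm (fk k y) < 1" using hd[of y] t by (simp add: y_def)
  moreover have "fk k y \<ge> 16/15"
  proof -
    define N where "N = 30*K*t + 15*K + 4"
    define B where "B = 15*K + 4 - 8*t"
    have B: "B > 0" using t K by (simp add: B_def)
    have Kt: "0 \<le> K*t" using t K by simp
    have NB: "N \<ge> B" unfolding N_def B_def using t Kt by linarith
    have e1: "y + 1 = t" by (simp add: y_def)
    have e2: "15*K - 8*y - 4 = B" by (simp add: y_def B_def)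
    have e3: "30*K*y + 45*K + 4 = N" by (simp add: y_def N_def algebra_simps)
    have "fk k y = 4/15*(30*K*y+45*K+4)/((y+1)^2*(15*K-8*y-4))" by (simp add: fk_def K_def)
    also have "\<dots> = 4/15*N/(t^2*B)" by (simp only: e1 e2 e3)
    also have "\<dots> = 4/15 * (N/B) * (1/t^2)" using t B by (simp add: field_simps)
    finally have fy: "fk k y = 4/15 * (N/B) * (1/t^2)" .
    have "N/B \<ge> 1" using NB B by simp
    moreover have "1/t^2 \<ge> 4"
    proof -
      have "t^2 \<le> 1/4" using t power_mono[of t "1/2" 2] by (simp add: power2_eq_square)
      then show ?thesis using t by (simp add: field_simps)
    qed
    ultimately have "(N/B) * (1/t^2) \<ge> 1 * 4" by (intro mult_mono) auto
    then show ?thesis unfolding fy by simp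
  qed
  ultimately show False by simp
qed

lemma not_cont_right:
  fixes k :: nat assumes k: "k \<ge> 1"
  shows "\<not> isCont (fk k) ((15 * real k - 4) / 8)"
proof
  define K where "K = real k"
  have K: "K \<ge> 1" using k by (simp add: K_def)
  define R where "R = (15 * K - 4) / 8"
  have R: "R \<ge> 11/8" using K by (simp add: R_def)
  assume c: "isCont (fk k) ((15 * real k - 4) / 8)"
  have "8*R = 15*K-4" by (simp add: R_def)
  then have R0: "15*K - 8*R - 4 = 0" by linarith
  have f0: "fk k R = 0" unfolding fk_def K_def[symmetric] R0 by simp
  from c have "(fk k \<longlongrightarrow> 0) (at R)" unfolding isCont_def f0[symmetric] R_def K_def .
  from LIM_D[OF this, of 1] obtain d where d: "d > 0"
    and hd: "\<And>y. y \<noteq> R \<and> norm (y - R) < d \<longrightarrow> norm (fk k y - 0) < 1" by auto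
  define t where "t = min (d/2) (1/(30*(R+1)^2))"
  have R1: "(R+1)^2 \<ge> 1" using R by (simp add: one_le_power)
  have t: "0 < t" "t \<le> 1/(30*(R+1)^2)" "t < d" using d R by (auto simp: t_def)
  have t1: "t \<le> 1" using t(2) R1 by (smt (verit) le_divide_eq_1)
  define y where "y = R - t"
  have y0: "y \<ge> 0" using t1 R by (simp add: y_def)
  have "norm (fk k y) < 1" using hd[of y] t by (simp add: y_def)
  moreover have "fk k y \<ge> 1"
  proof -
    define N where "N = 30*K*y + 45*K + 4"
    have N: "N \<ge> 1" using K y0 by (simp add: N_def)
    have Bt: "15*K - 8*y - 4 = 8*t" using R0 unfolding y_def by (simp add: algebra_simps)
    have fy: "fk k y = 4/15 * (N / ((y+1)^2 * (8*t)))"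
      unfolding fk_def N_def Bt[symmetric] K_def by simp
    have yR: "(y+1)^2 \<le> (R+1)^2" using y0 t by (intro power_mono) (auto simp: y_def)
    have "1 / ((R+1)^2 * (8*t)) \<le> N / ((y+1)^2 * (8*t))"
      using N yR y0 t by (intro frac_le) auto
    moreover have "1 / ((R+1)^2 * (8*t)) \<ge> 30/8"
    proof -
      have pos: "30*(R+1)^2 > 0" using R by simp
      have "t*(30*(R+1)^2) \<le> 1" using t(2) pos by (simp add: le_divide_eq)
      then have h: "30/8 * ((R+1)^2 * (8*t)) \<le> 1" by (simp add: algebra_simps)
      have q: "(R+1)^2 * (8*t) > 0" using t R by simp
      show ?thesis using q h by (simp add: le_divide_eq)
    qed
    ultimately have X: "N / ((y+1)^2 * (8*t)) \<ge> 30/8" by linarith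
    show ?thesis unfolding fy using X by linarith
  qed
  ultimately show False by simp
qed



theorem mainTheorem13:
  fixes k :: nat
  assumes "k \<ge> 1"
  shows "(\<forall>x \<in> {-1<..<(15 * real k - 4) / 8}.
            fk k x = Vol (dual_trunc (sigma0 k) (vector [x, 1, 0])))
       \<and> x0 k \<in> {-1..(15 * real k - 4) / 8}
       \<and> (\<forall>x \<in> {-1..(15 * real k - 4) / 8}.
            (fk k has_real_derivative 0) (at x) \<longleftrightarrow> x = x0 k)
       \<and> (k \<noteq> 3 \<longrightarrow> x0 k \<notin> \<rat>)"
proof (intro conjI ballI impI)
  fix x assume "x \<in> {-1<..<(15 * real k - 4) / 8}"
  then show "fk k x = Vol (dual_trunc (sigma0 k) (vector [x, 1, 0]))"
    using vol_formula[OF assms] by auto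
next
  show "x0 k \<in> {-1..(15 * real k - 4) / 8}" using x0_facts(3,4)[OF assms] by simp
next
  assume "k \<noteq> 3" then show "x0 k \<notin> \<rat>" using x0_irrat assms by blast
next
  fix x assume x: "x \<in> {-1..(15 * real k - 4) / 8}"
  define x1 where "x1 = (225*(real k)^2 - 600*(real k) - 48 - (15*(real k)+4)* sqrt (225*(real k)^2 + 600*(real k) + 144)) / (480*(real k))"
  have fac: "\<And>x. Qk (real k) x = 480*(real k)*(x - x0 k)*(x - x1)" "x1 < -1" "-1 < x0 k" "x0 k < (15*(real k)-4)/8"
    using x0_facts[OF assms] unfolding x1_def by auto
  consider "x = -1" | "x = (15 * real k - 4) / 8" | "-1 < x \<and> x < (15 * real k - 4) / 8" using x by fastforce
  then show "(fk k has_real_derivative 0) (at x) \<longleftrightarrow> x = x0 k"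
  proof cases
    case 1
    then show ?thesis using not_cont_left[OF assms] DERIV_isCont fac(3) by fastforce
  next
    case 2
    then show ?thesis using not_cont_right[OF assms] DERIV_isCont fac(4) by fastforce
  next
    case 3
    then have x1: "-1 < x" and x2: "x < (15 * real k - 4) / 8" by auto
    note d = deriv_fk[OF assms x1 x2]
    have y: "x + 1 > 0" using x1 by simp
    have B: "15 * real k - 8 * x - 4 > 0" using x2 by simp
    have Dn: "((x+1)^2 * (15 * real k - 8 * x - 4))^2 > 0" using y B by simp
    have "(fk k has_real_derivative 0) (at x) \<longleftrightarrow>
          4/15 * ((x+1) * Qk (real k) x) / ((x+1)^2 * (15 * real k - 8 * x - 4))^2 = 0"
      using d DERIV_unique by metis
    also have "\<dots> \<longleftrightarrow> Qk (real k) x = 0" using Dn y by simp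
    also have "\<dots> \<longleftrightarrow> x = x0 k" unfolding fac(1) using assms fac(2) x1 by auto
    finally show ?thesis .
  qed
qed

end
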